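(* For all integers $0\le k\le n$, the number of directed paths in $\Gamma$ from the node $(k,0)$ to the node $(n,n)$ is $$\pi(n,n,k)=\binom{n}{k}E_{n-k}.$$
   Context: Let $\Gamma$ be the directed graph whose nodes are the pairs $(n,k)$ of integers with $n\ge k\ge 0$, and whose edges are, for all $n\ge k\ge 0$: $(n+1,k)\to(n+1,k+1)$ and $(n,n-k)\to(n+1,k+1)$. $\pi(n,k,i)$ denotes the number of directed paths in $\Gamma$ from $(i,0)$ to $(n,k)$, where the trivial path counts when $(i,0)=(n,k)$. A permutation $\sigma_1\cdots\sigma_n$ of $\{1,\ldots,n\}$ is down-up if $\sigma_1>\sigma_2<\sigma_3>\cdots$; $E_n$ is the number of such permutations, with $E_0=E_1=1$. *)

theory Defs
  imports Main
begin

definition gnode :: "nat \<times> nat \<Rightarrow> bool" where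
  "gnode v \<longleftrightarrow> snd v \<le> fst v"

definition gedge :: "nat \<times> nat \<Rightarrow> nat \<times> nat \<Rightarrow> bool" where
  "gedge u v \<longleftrightarrow>
     (\<exists>n k. k \<le> n \<and> u = (n+1, k) \<and> v = (n+1, k+1)) \<or>
     (\<exists>n k. k \<le> n \<and> u = (n, n-k) \<and> v = (n+1, k+1))"

definition gpath :: "(nat \<times> nat) list \<Rightarrow> bool" where
  "gpath p \<longleftrightarrow> p \<noteq> [] \<and> (\<forall>v\<in>set p. gnode v) \<and>
     (\<forall>j. Suc j < length p \<longrightarrow> gedge (p ! j) (p ! Suc j))"

text \<open>pi(n,k,i): number of directed paths from (i,0) to (n,k) (trivial path included).\<close>
definition npaths :: "nat \<Rightarrow> nat \<Rightarrow> nat \<Rightarrow> nat" where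
  "npaths n k i = card {p. gpath p \<and> hd p = (i,0) \<and> last p = (n,k)}"

definition down_up :: "nat list \<Rightarrow> bool" where
  "down_up xs \<longleftrightarrow> (\<forall>j. Suc j < length xs \<longrightarrow>
      (if even j then xs ! j > xs ! Suc j else xs ! j < xs ! Suc j))"

definition euler_E :: "nat \<Rightarrow> nat" where
  "euler_E n = card {xs. distinct xs \<and> set xs = {1..n} \<and> down_up xs}"

end

theory Submission imports Defs begin

fun P :: "nat \<Rightarrow> nat \<Rightarrow> nat \<Rightarrow> nat" where
  "P n 0 i = (if n = i then 1 else 0)"
| "P 0 (Suc k) i = 0"
| "P (Suc n) (Suc k) i = (if k \<le> n then P (Suc n) k i + P n (n - k) i else 0)"

lemma gedge_iff: "gedge u (n,k) \<longleftrightarrow> 1 \<le> k \<and> k \<le> n \<and> (u = (n,k-1) \<or> u = (n-1, n-k))"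
  unfolding gedge_def
  apply (cases n; cases k; auto)
  done

lemma gpath_snoc: "gpath (q @ [v]) \<longleftrightarrow> (q = [] \<and> gnode v) \<or> (q \<noteq> [] \<and> gpath q \<and> gnode v \<and> gedge (last q) v)"
proof (cases "q = []")
  case True then show ?thesis by (simp add: gpath_def)
next
  case False
  have "(\<forall>j. Suc j < length (q @ [v]) \<longrightarrow> gedge ((q @ [v]) ! j) ((q @ [v]) ! Suc j)) \<longleftrightarrow>
        (\<forall>j. Suc j < length q \<longrightarrow> gedge (q ! j) (q ! Suc j)) \<and> gedge (last q) v" (is "?L \<longleftrightarrow> ?R")
  proof
    assume L: ?L
    have "gedge (q ! j) (q ! Suc j)" if "Suc j < length q" for j
      using L[rule_format, of j] that by (simp add: nth_append)
    moreover have "gedge (last q) v"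
      using L[rule_format, of "length q - 1"] False by (simp add: nth_append last_conv_nth)
    ultimately show ?R by blast
  next
    assume R: ?R
    show ?L
    proof (intro allI impI)
      fix j assume j: "Suc j < length (q @ [v])"
      show "gedge ((q @ [v]) ! j) ((q @ [v]) ! Suc j)"
      proof (cases "Suc j < length q")
        case True then show ?thesis using R by (simp add: nth_append)
      next
        case False
        then have "j = length q - 1" using j by simp
        then show ?thesis using R False \<open>q \<noteq> []\<close> by (simp add: nth_append last_conv_nth)
      qed
    qed
  qed
  then show ?thesis using False by (auto simp: gpath_def)
qed

definition Paths where "Paths s v = {p. gpath p \<and> hd p = s \<and> last p = v}"

lemma Paths_base: "Paths (i,0) (n,0) = (if n = i then {[(i,0)]} else {})"
proof -
  have "p = [(i,0)] \<and> n = i" if "p \<in> Paths (i,0) (n,0)" for p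
  proof -
    from that have p: "gpath p" "hd p = (i,0)" "last p = (n,0)" by (auto simp: Paths_def)
    then have "p \<noteq> []" by (simp add: gpath_def)
    then obtain q v where pq: "p = q @ [v]" using append_butlast_last_id[of p, symmetric] by blast
    show ?thesis
    proof (cases "q = []")
      case True then show ?thesis using p pq by simp
    next
      case False
      then have "gedge (last q) v" using p(1) pq gpath_snoc by blast
      moreover have "v = (n,0)" using p pq by simp
      ultimately show ?thesis by (simp add: gedge_iff)
    qed
  qed
  then have sub: "Paths (i,0) (n,0) \<subseteq> {[(i,0)]}" and ne: "n \<noteq> i \<Longrightarrow> Paths (i,0) (n,0) = {}"
    by blast+
  have "[(i,0)] \<in> Paths (i,0) (i,0)" by (simp add: Paths_def gpath_def gnode_def)
  then show ?thesis using sub ne by (cases "n = i") auto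
qed

lemma Paths_step:
  assumes "1 \<le> k" "k \<le> n"
  shows "Paths (i,0) (n,k) = (\<lambda>q. q @ [(n,k)]) ` (Paths (i,0) (n,k-1) \<union> Paths (i,0) (n-1,n-k))"
proof -
  have gn: "gnode (n,k)" using assms by (simp add: gnode_def)
  show ?thesis
  proof (intro equalityI subsetI)
    fix p assume "p \<in> Paths (i,0) (n,k)"
    then have p: "gpath p" "hd p = (i,0)" "last p = (n,k)" by (auto simp: Paths_def)
    then have "p \<noteq> []" by (simp add: gpath_def)
    then obtain q v where pq: "p = q @ [v]" using append_butlast_last_id[of p, symmetric] by blast
    have v: "v = (n,k)" using p pq by simp
    have "q \<noteq> []" using p pq v assms by auto
    then have q: "gpath q" "gedge (last q) (n,k)" "hd q = (i,0)" using p pq v gpath_snoc by auto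
    then have "last q = (n,k-1) \<or> last q = (n-1,n-k)" by (simp add: gedge_iff)
    then show "p \<in> (\<lambda>q. q @ [(n,k)]) ` (Paths (i,0) (n,k-1) \<union> Paths (i,0) (n-1,n-k))"
      using q pq v by (auto simp: Paths_def)
  next
    fix p assume "p \<in> (\<lambda>q. q @ [(n,k)]) ` (Paths (i,0) (n,k-1) \<union> Paths (i,0) (n-1,n-k))"
    then obtain q where pq: "p = q @ [(n,k)]" and q: "q \<in> Paths (i,0) (n,k-1) \<union> Paths (i,0) (n-1,n-k)" by auto
    then have q2: "gpath q" "hd q = (i,0)" "last q = (n,k-1) \<or> last q = (n-1,n-k)" by (auto simp: Paths_def)
    then have "q \<noteq> []" by (simp add: gpath_def)
    moreover have "gedge (last q) (n,k)" using q2 assms by (auto simp: gedge_iff)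
    ultimately show "p \<in> Paths (i,0) (n,k)" using gpath_snoc[of q "(n,k)"] q2 gn pq by (auto simp: Paths_def)
  qed
qed

lemma Paths_P: "k \<le> n \<Longrightarrow> finite (Paths (i,0) (n,k)) \<and> card (Paths (i,0) (n,k)) = P n k i"
proof (induction n k i rule: P.induct)
  case (1 n i)
  then show ?case by (simp add: Paths_base)
next
  case (2 k i)
  then show ?case by simp
next
  case (3 n k i)
  have k: "k \<le> n" using 3 by simp
  have eq: "Paths (i,0) (Suc n, Suc k) = (\<lambda>q. q @ [(Suc n, Suc k)]) ` (Paths (i,0) (Suc n, k) \<union> Paths (i,0) (n, n-k))"
    using Paths_step[of "Suc k" "Suc n" i] k by simp
  have f1: "finite (Paths (i,0) (Suc n, k))" "card (Paths (i,0) (Suc n, k)) = P (Suc n) k i"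
    using 3 k by auto
  have f2: "finite (Paths (i,0) (n, n-k))" "card (Paths (i,0) (n, n-k)) = P n (n-k) i"
    using 3 k by auto
  have disj: "Paths (i,0) (Suc n, k) \<inter> Paths (i,0) (n, n-k) = {}" by (auto simp: Paths_def)
  have inj: "inj_on (\<lambda>q. q @ [(Suc n, Suc k)]) X" for X by (auto simp: inj_on_def)
  show ?case using f1 f2 disj k unfolding eq
    by (simp add: card_image[OF inj] card_Un_disjoint)
qed

lemma npaths_P: "k \<le> n \<Longrightarrow> npaths n k i = P n k i"
  using Paths_P by (simp add: npaths_def Paths_def[symmetric])


lemma P_high: "n < i \<Longrightarrow> P n k i = 0"
  by (induction n k i rule: P.induct) auto

lemma P_row: "k \<le> i \<Longrightarrow> P i k i = 1"
proof (induction k)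
  case 0 then show ?case by simp
next
  case (Suc k)
  then obtain n where i: "i = Suc n" by (cases i) auto
  show ?case using Suc i by (simp add: P_high)
qed

lemma ent_rec: "j \<le> m \<Longrightarrow> P (Suc m) (Suc j) 0 = P (Suc m) j 0 + P m (m - j) 0"
  by simp

definition F :: "nat \<Rightarrow> nat \<Rightarrow> nat \<Rightarrow> nat" where
  "F n k i = (\<Sum>a\<le>i. (k choose a) * ((n - k) choose (i - a)) * P (n - i) (k - a) 0)"

lemma F_high: assumes "k \<le> n" "n < i" shows "F n k i = 0"
proof -
  have "(k choose a) * ((n - k) choose (i - a)) = 0" for a
  proof (cases "a \<le> k")
    case True then have "n - k < i - a" using assms by arith
    then show ?thesis by simp
  qed simp
  then show ?thesis by (simp add: F_def)
qed

lemma F_row: assumes "k \<le> i" shows "F i k i = 1"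
proof -
  have "(k choose a) * ((i - k) choose (i - a)) * P (i - i) (k - a) 0 = (if a = k then 1 else 0)" if "a \<le> i" for a
  proof (cases "a \<le> k")
    case True
    show ?thesis
    proof (cases "a = k")
      case False then have "k - a > 0" using True by simp
      then obtain j where "k - a = Suc j" by (cases "k - a") auto
      then show ?thesis using False by simp
    qed simp
  qed simp
  then have "F i k i = (\<Sum>a\<le>i. if a = k then 1 else 0)" unfolding F_def by (intro sum.cong) auto
  also have "\<dots> = 1" using assms by simp
  finally show ?thesis .
qed

lemma pascal_sum_k:
  "(\<Sum>a\<le>i. (Suc k choose a) * X a) = (\<Sum>a\<le>i. (k choose a) * X a) + (\<Sum>a<i. (k choose a) * X (Suc a))"
  by (induction i) (simp_all add: algebra_simps)

lemma pascal_sum_n: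
  "(\<Sum>a\<le>i. (k choose a) * (Suc r choose (i - a)) * Y a) =
   (\<Sum>a\<le>i. (k choose a) * (r choose (i - a)) * Y a) + (\<Sum>a<i. (k choose a) * (r choose (i - Suc a)) * Y a)"
proof -
  have "(\<Sum>a<i. (k choose a) * (Suc r choose (i - a)) * Y a) =
        (\<Sum>a<i. (k choose a) * (r choose (i - a)) * Y a + (k choose a) * (r choose (i - Suc a)) * Y a)"
  proof (intro sum.cong refl)
    fix a assume "a \<in> {..<i}"
    then have "i - a = Suc (i - Suc a)" by auto
    then show "(k choose a) * (Suc r choose (i - a)) * Y a =
          (k choose a) * (r choose (i - a)) * Y a + (k choose a) * (r choose (i - Suc a)) * Y a"
      by (simp add: algebra_simps)
  qed
  then show ?thesis by (simp add: lessThan_Suc_atMost[symmetric] sum.distrib)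
qed

lemma F_step:
  assumes "k \<le> n" "i \<le> n"
  shows "F (Suc n) (Suc k) i = F (Suc n) k i + F n (n - k) i"
proof -
  define m where "m = n - i"
  have sm: "Suc n - i = Suc m" using assms m_def by simp
  have snk: "Suc n - k = Suc (n - k)" using assms by simp
  define c where "c a = (k choose a) * ((n - k) choose (i - a))" for a
  have L: "F (Suc n) (Suc k) i = (\<Sum>a\<le>i. (Suc k choose a) * (((n - k) choose (i - a)) * P (Suc m) (Suc k - a) 0))"
    unfolding F_def sm by (simp add: mult.assoc)
  also have "\<dots> = (\<Sum>a\<le>i. (k choose a) * (((n - k) choose (i - a)) * P (Suc m) (Suc k - a) 0))
      + (\<Sum>a<i. (k choose a) * (((n - k) choose (i - Suc a)) * P (Suc m) (k - a) 0))"
    by (simp add: pascal_sum_k)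
  also have "(\<Sum>a\<le>i. (k choose a) * (((n - k) choose (i - a)) * P (Suc m) (Suc k - a) 0))
      = (\<Sum>a\<le>i. c a * P (Suc m) (k - a) 0) + (\<Sum>a\<le>i. c a * P m (m - (k - a)) 0)"
  proof -
    have "(k choose a) * (((n - k) choose (i - a)) * P (Suc m) (Suc k - a) 0)
        = c a * P (Suc m) (k - a) 0 + c a * P m (m - (k - a)) 0" for a
    proof (cases "a \<le> k \<and> i - a \<le> n - k")
      case True
      then have "k - a \<le> m" using assms m_def by arith
      moreover have "Suc k - a = Suc (k - a)" using True by arith
      ultimately show ?thesis by (simp add: c_def algebra_simps)
    next
      case False
      then have "c a = 0" by (auto simp: c_def)
      moreover have "(k choose a) * ((n - k) choose (i - a)) = 0" using False by auto
      ultimately show ?thesis by (simp add: mult.assoc[symmetric])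
    qed
    then show ?thesis by (simp add: sum.distrib)
  qed
  also have "(\<Sum>a\<le>i. c a * P m (m - (k - a)) 0) = F n (n - k) i"
  proof -
    have "F n (n - k) i = (\<Sum>a\<le>i. ((n - k) choose a) * (k choose (i - a)) * P m (n - k - a) 0)"
      unfolding F_def m_def using assms by simp
    also have "\<dots> = (\<Sum>a\<le>i. ((n - k) choose (i - a)) * (k choose (i - (i - a))) * P m (n - k - (i - a)) 0)"
      using sum.atLeastAtMost_rev[of "\<lambda>a. ((n - k) choose a) * (k choose (i - a)) * P m (n - k - a) 0" 0 i]
      by (simp add: atMost_atLeast0)
    also have "\<dots> = (\<Sum>a\<le>i. c a * P m (m - (k - a)) 0)"
    proof (intro sum.cong refl)
      fix a assume a: "a \<in> {..i}"
      show "((n - k) choose (i - a)) * (k choose (i - (i - a))) * P m (n - k - (i - a)) 0 = c a * P m (m - (k - a)) 0"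
      proof (cases "a \<le> k \<and> i - a \<le> n - k")
        case True
        then have "n - k - (i - a) = m - (k - a)" using a assms m_def by auto
        then show ?thesis using a by (simp add: c_def)
      next
        case False
        then show ?thesis using a by (auto simp: c_def)
      qed
    qed
    finally show ?thesis by simp
  qed
  finally have LHS: "F (Suc n) (Suc k) i = (\<Sum>a\<le>i. c a * P (Suc m) (k - a) 0) + F n (n - k) i
      + (\<Sum>a<i. (k choose a) * (((n - k) choose (i - Suc a)) * P (Suc m) (k - a) 0))" .
  have "F (Suc n) k i = (\<Sum>a\<le>i. (k choose a) * (Suc (n - k) choose (i - a)) * P (Suc m) (k - a) 0)"
    unfolding F_def sm snk by simp
  also have "\<dots> = (\<Sum>a\<le>i. c a * P (Suc m) (k - a) 0)
      + (\<Sum>a<i. (k choose a) * (((n - k) choose (i - Suc a)) * P (Suc m) (k - a) 0))"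
    using pascal_sum_n[of k "n - k" i "\<lambda>a. P (Suc m) (k - a) 0"] by (simp add: c_def mult.assoc)
  finally show ?thesis using LHS by simp
qed

lemma P_F: "k \<le> n \<Longrightarrow> P n k i = F n k i"
proof (induction n k i rule: P.induct)
  case (1 n i)
  have "F n 0 i = (\<Sum>a\<le>i. if a = 0 then (n choose i) * P (n - i) 0 0 else 0)"
    unfolding F_def by (intro sum.cong refl) auto
  also have "\<dots> = (n choose i) * P (n - i) 0 0" by simp
  finally show ?case by auto
next
  case (2 k i)
  then show ?case by simp
next
  case (3 n k i)
  have k: "k \<le> n" using 3 by simp
  consider "i \<le> n" | "i = Suc n" | "Suc n < i" by arith
  then show ?case
  proof cases
    case 1
    then show ?thesis using 3 k F_step[OF k 1] by simp
  next
    case 2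
    then show ?thesis using k by (simp add: P_row F_row del: P.simps)
  next
    case 3
    then show ?thesis using k by (simp add: P_high F_high del: P.simps)
  qed
qed

lemma P_diag: "i \<le> n \<Longrightarrow> P n n i = (n choose i) * P (n - i) (n - i) 0"
proof -
  assume i: "i \<le> n"
  have "P n n i = F n n i" by (simp add: P_F)
  also have "\<dots> = (\<Sum>a\<le>i. if a = i then (n choose i) * P (n - i) (n - i) 0 else 0)"
    unfolding F_def
  proof (intro sum.cong refl)
    fix a assume "a \<in> {..i}"
    then show "(n choose a) * ((n - n) choose (i - a)) * P (n - i) (n - a) 0 =
      (if a = i then (n choose i) * P (n - i) (n - i) 0 else 0)" by auto
  qed
  also have "\<dots> = (n choose i) * P (n - i) (n - i) 0" by simp
  finally show ?thesis .
qed


definition up_down :: "nat list \<Rightarrow> bool" where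
  "up_down xs \<longleftrightarrow> (\<forall>j. Suc j < length xs \<longrightarrow>
      (if even j then xs ! j < xs ! Suc j else xs ! j > xs ! Suc j))"

lemma all_nat_split: "(\<forall>j::nat. Q j) \<longleftrightarrow> Q 0 \<and> (\<forall>j. Q (Suc j))"
  by (metis not0_implies_Suc)

lemma du_cons: "down_up (x # y # ys) \<longleftrightarrow> y < x \<and> up_down (y # ys)"
  unfolding down_up_def up_down_def
  by (subst all_nat_split) (simp, blast)

lemma ud_cons: "up_down (x # y # ys) \<longleftrightarrow> x < y \<and> down_up (y # ys)"
  unfolding down_up_def up_down_def
  by (subst all_nat_split) (simp, blast)

lemma du_single: "down_up [x]" and ud_single: "up_down [x]"
  by (simp_all add: down_up_def up_down_def)

definition rank :: "nat set \<Rightarrow> nat \<Rightarrow> nat" where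
  "rank B x = card {y\<in>B. y < x}"

lemma rank_less:
  assumes "finite B" "y \<in> B"
  shows "y < x \<longleftrightarrow> rank B y < rank B x"
proof
  assume "y < x"
  then have "{z\<in>B. z < y} \<subset> {z\<in>B. z < x}" using assms by auto
  then show "rank B y < rank B x" unfolding rank_def using assms by (simp add: psubset_card_mono)
next
  assume r: "rank B y < rank B x"
  show "y < x"
  proof (rule ccontr)
    assume "\<not> y < x"
    then have "{z\<in>B. z < x} \<subseteq> {z\<in>B. z < y}" by auto
    then have "rank B x \<le> rank B y" unfolding rank_def using assms by (simp add: card_mono)
    then show False using r by simp
  qed
qed

lemma rank_inj: "finite B \<Longrightarrow> inj_on (rank B) B"
  unfolding inj_on_def by (metis linorder_neqE_nat rank_less less_irrefl)

lemma rank_le: "finite B \<Longrightarrow> rank B x \<le> card B"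
  unfolding rank_def by (simp add: card_mono)

lemma rank_image: assumes "finite B" shows "rank B ` B = {..<card B}"
proof -
  have sub: "rank B ` B \<subseteq> {..<card B}"
  proof
    fix j assume "j \<in> rank B ` B"
    then obtain y where y: "y \<in> B" "j = rank B y" by auto
    have "{z\<in>B. z < y} \<subset> B" using y by auto
    then show "j \<in> {..<card B}" using y assms unfolding rank_def by (simp add: psubset_card_mono)
  qed
  have "card (rank B ` B) = card B" using rank_inj[OF assms] by (simp add: card_image)
  then show ?thesis using sub by (intro card_subset_eq) auto
qed

lemma rank_image_less: assumes "finite B" shows "rank B ` {y\<in>B. y < x} = {..<rank B x}"
proof (intro equalityI subsetI)
  fix j assume "j \<in> rank B ` {y\<in>B. y < x}"
  then show "j \<in> {..<rank B x}" using rank_less[OF assms] by auto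
next
  fix j assume j: "j \<in> {..<rank B x}"
  then have "j \<in> rank B ` B" using rank_image[OF assms] rank_le[OF assms, of x] by auto
  then obtain y where "y \<in> B" "j = rank B y" by auto
  then show "j \<in> rank B ` {y\<in>B. y < x}" using j rank_less[OF assms] by auto
qed

lemma rank_image_greater: assumes "finite B" "x \<notin> B"
  shows "rank B ` {y\<in>B. x < y} = {rank B x..<card B}"
proof (intro equalityI subsetI)
  fix j assume "j \<in> rank B ` {y\<in>B. x < y}"
  then obtain y where y: "y \<in> B" "x < y" "j = rank B y" by auto
  then have "\<not> rank B y < rank B x" using rank_less[OF assms(1) y(1), of x] by simp
  moreover have "j < card B" using y rank_image[OF assms(1)] by auto
  ultimately show "j \<in> {rank B x..<card B}" using y by auto
next
  fix j assume j: "j \<in> {rank B x..<card B}"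
  then have "j \<in> rank B ` B" using rank_image[OF assms(1)] by auto
  then obtain y where y: "y \<in> B" "j = rank B y" by auto
  then have "\<not> y < x" using j rank_less[OF assms(1) y(1), of x] by auto
  moreover have "y \<noteq> x" using y assms by auto
  ultimately show "j \<in> rank B ` {y\<in>B. x < y}" using y by auto
qed

lemma rank_remove: "rank (A - {x}) x = rank A x"
  unfolding rank_def by (rule arg_cong[where f=card]) auto

lemma finite_dl: "finite A \<Longrightarrow> finite {xs. distinct xs \<and> set xs = A \<and> Q xs}"
  by (rule finite_subset[OF _ finite_subset_distinct[of A]]) auto

definition dcnt where "dcnt A x = card {xs. distinct xs \<and> set xs = A \<and> down_up xs \<and> hd xs = x}"
definition ucnt where "ucnt A x = card {xs. distinct xs \<and> set xs = A \<and> up_down xs \<and> hd xs = x}"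

lemma P_sum: "k \<le> Suc n \<Longrightarrow> P (Suc n) k 0 = (\<Sum>j<k. P n (n - j) 0)"
  by (induction k) auto

lemma sum_rev_ivl: "k \<le> N \<Longrightarrow> (\<Sum>t<N - k. g (N - Suc t)) = (\<Sum>j\<in>{k..<N}. (g j :: nat))"
  by (rule sum.reindex_bij_witness[of _ "\<lambda>j. N - Suc j" "\<lambda>j. N - Suc j"]) auto

lemma single_list: "(distinct xs \<and> set xs = {x}) \<longleftrightarrow> xs = [x]"
proof
  assume a: "distinct xs \<and> set xs = {x}"
  then have "length xs = 1" using distinct_card[of xs] by simp
  then obtain y where "xs = [y]" by (cases xs) auto
  then show "xs = [x]" using a by simp
qed simp

lemma split_du:
  assumes "finite A" "x \<in> A" "card A = Suc (Suc n)"
  shows "{xs. distinct xs \<and> set xs = A \<and> down_up xs \<and> hd xs = x} =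
    (\<Union>y\<in>{y\<in>A - {x}. y < x}. (Cons x) ` {ys. distinct ys \<and> set ys = A - {x} \<and> up_down ys \<and> hd ys = y})"
proof (intro equalityI subsetI)
  fix xs assume "xs \<in> {xs. distinct xs \<and> set xs = A \<and> down_up xs \<and> hd xs = x}"
  then have xs: "distinct xs" "set xs = A" "down_up xs" "hd xs = x" by auto
  have "xs \<noteq> []" using xs assms by auto
  then obtain ys where xs_eq: "xs = x # ys" using xs(4) by (cases xs) auto
  have "ys \<noteq> []"
  proof
    assume "ys = []" then have "A = {x}" using xs xs_eq by simp
    then have "card A = 1" by simp
    then show False using assms(3) by simp
  qed
  then obtain y zs where ys: "ys = y # zs" by (cases ys) auto
  have sy: "set ys = A - {x}" using xs xs_eq by auto
  have dy: "distinct ys" using xs xs_eq by simp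
  have c: "y < x \<and> up_down ys" using xs(3) unfolding xs_eq ys by (simp only: du_cons)
  have "y \<in> set ys" using ys by simp
  then have yA: "y \<in> A - {x}" using sy by blast
  have "ys \<in> {ys. distinct ys \<and> set ys = A - {x} \<and> up_down ys \<and> hd ys = y}" using sy dy c ys by simp
  then show "xs \<in> (\<Union>y\<in>{y\<in>A - {x}. y < x}. (Cons x) ` {ys. distinct ys \<and> set ys = A - {x} \<and> up_down ys \<and> hd ys = y})"
    using yA c xs_eq by blast
next
  fix xs assume "xs \<in> (\<Union>y\<in>{y\<in>A - {x}. y < x}. (Cons x) ` {ys. distinct ys \<and> set ys = A - {x} \<and> up_down ys \<and> hd ys = y})"
  then obtain y ys where y: "y \<in> A - {x}" "y < x" and ys: "distinct ys" "set ys = A - {x}" "up_down ys" "hd ys = y"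
    and xs: "xs = x # ys" by blast
  have "ys \<noteq> []"
  proof
    assume "ys = []" then have "A - {x} = {}" using ys(2) by simp
    then show False using y(1) by blast
  qed
  then obtain zs where "ys = y # zs" using ys(4) by (cases ys) auto
  then have "down_up xs" using xs ys y by (simp add: du_cons)
  moreover have "distinct xs" using xs ys by simp
  moreover have "set xs = A" using xs ys(2) assms(2) by (simp add: insert_absorb)
  ultimately show "xs \<in> {xs. distinct xs \<and> set xs = A \<and> down_up xs \<and> hd xs = x}"
    using xs by simp
qed

lemma split_ud:
  assumes "finite A" "x \<in> A" "card A = Suc (Suc n)"
  shows "{xs. distinct xs \<and> set xs = A \<and> up_down xs \<and> hd xs = x} =
    (\<Union>y\<in>{y\<in>A - {x}. x < y}. (Cons x) ` {ys. distinct ys \<and> set ys = A - {x} \<and> down_up ys \<and> hd ys = y})"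
proof (intro equalityI subsetI)
  fix xs assume "xs \<in> {xs. distinct xs \<and> set xs = A \<and> up_down xs \<and> hd xs = x}"
  then have xs: "distinct xs" "set xs = A" "up_down xs" "hd xs = x" by auto
  have "xs \<noteq> []" using xs assms by auto
  then obtain ys where xs_eq: "xs = x # ys" using xs(4) by (cases xs) auto
  have "ys \<noteq> []"
  proof
    assume "ys = []" then have "A = {x}" using xs xs_eq by simp
    then have "card A = 1" by simp
    then show False using assms(3) by simp
  qed
  then obtain y zs where ys: "ys = y # zs" by (cases ys) auto
  have sy: "set ys = A - {x}" using xs xs_eq by auto
  have dy: "distinct ys" using xs xs_eq by simp
  have c: "x < y \<and> down_up ys" using xs(3) unfolding xs_eq ys by (simp only: ud_cons)
  have "y \<in> set ys" using ys by simp
  then have yA: "y \<in> A - {x}" using sy by blast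
  have "ys \<in> {ys. distinct ys \<and> set ys = A - {x} \<and> down_up ys \<and> hd ys = y}" using sy dy c ys by simp
  then show "xs \<in> (\<Union>y\<in>{y\<in>A - {x}. x < y}. (Cons x) ` {ys. distinct ys \<and> set ys = A - {x} \<and> down_up ys \<and> hd ys = y})"
    using yA c xs_eq by blast
next
  fix xs assume "xs \<in> (\<Union>y\<in>{y\<in>A - {x}. x < y}. (Cons x) ` {ys. distinct ys \<and> set ys = A - {x} \<and> down_up ys \<and> hd ys = y})"
  then obtain y ys where y: "y \<in> A - {x}" "x < y" and ys: "distinct ys" "set ys = A - {x}" "down_up ys" "hd ys = y"
    and xs: "xs = x # ys" by blast
  have "ys \<noteq> []"
  proof
    assume "ys = []" then have "A - {x} = {}" using ys(2) by simp
    then show False using y(1) by blast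
  qed
  then obtain zs where "ys = y # zs" using ys(4) by (cases ys) auto
  then have "up_down xs" using xs ys y by (simp add: ud_cons)
  moreover have "distinct xs" using xs ys by simp
  moreover have "set xs = A" using xs ys(2) assms(2) by (simp add: insert_absorb)
  ultimately show "xs \<in> {xs. distinct xs \<and> set xs = A \<and> up_down xs \<and> hd xs = x}"
    using xs by simp
qed

lemma card_UN_Cons:
  assumes "finite I" "finite B"
  shows "card (\<Union>y\<in>I. (Cons x) ` {ys. distinct ys \<and> set ys = B \<and> Q ys \<and> hd ys = y})
       = (\<Sum>y\<in>I. card {ys. distinct ys \<and> set ys = B \<and> Q ys \<and> hd ys = y})"
proof -
  have "card (\<Union>y\<in>I. (Cons x) ` {ys. distinct ys \<and> set ys = B \<and> Q ys \<and> hd ys = y})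
       = (\<Sum>y\<in>I. card ((Cons x) ` {ys. distinct ys \<and> set ys = B \<and> Q ys \<and> hd ys = y}))"
    using assms by (intro card_UN_disjoint) (auto intro: finite_dl)
  also have "\<dots> = (\<Sum>y\<in>I. card {ys. distinct ys \<and> set ys = B \<and> Q ys \<and> hd ys = y})"
    by (intro sum.cong refl card_image) (auto simp: inj_on_def)
  finally show ?thesis .
qed

lemma counts:
  "\<forall>A x. finite A \<and> card A = Suc n \<and> x \<in> A \<longrightarrow> dcnt A x = P n (rank A x) 0 \<and> ucnt A x = P n (n - rank A x) 0"
proof (induction n)
  case 0
  show ?case
  proof (intro allI impI)
    fix A :: "nat set" and x :: nat assume a: "finite A \<and> card A = Suc 0 \<and> x \<in> A"
    then have "card A = 1" by simp
    then obtain z where z: "A = {z}" by (rule card_1_singletonE)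
    with a have A: "A = {x}" by simp
    have r: "rank A x = 0" unfolding rank_def A by simp
    have "{xs. distinct xs \<and> set xs = A \<and> down_up xs \<and> hd xs = x} = {[x]}"
    proof (intro equalityI subsetI)
      fix xs assume "xs \<in> {xs. distinct xs \<and> set xs = A \<and> down_up xs \<and> hd xs = x}"
      then have "distinct xs \<and> set xs = {x}" using A by simp
      then have "xs = [x]" by (rule single_list[THEN iffD1])
      then show "xs \<in> {[x]}" by simp
    next
      fix xs assume "xs \<in> {[x]}" then show "xs \<in> {xs. distinct xs \<and> set xs = A \<and> down_up xs \<and> hd xs = x}"
        using A du_single by simp
    qed
    moreover have "{xs. distinct xs \<and> set xs = A \<and> up_down xs \<and> hd xs = x} = {[x]}"
    proof (intro equalityI subsetI)
      fix xs assume "xs \<in> {xs. distinct xs \<and> set xs = A \<and> up_down xs \<and> hd xs = x}"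
      then have "distinct xs \<and> set xs = {x}" using A by simp
      then have "xs = [x]" by (rule single_list[THEN iffD1])
      then show "xs \<in> {[x]}" by simp
    next
      fix xs assume "xs \<in> {[x]}" then show "xs \<in> {xs. distinct xs \<and> set xs = A \<and> up_down xs \<and> hd xs = x}"
        using A ud_single by simp
    qed
    ultimately show "dcnt A x = P 0 (rank A x) 0 \<and> ucnt A x = P 0 (0 - rank A x) 0"
      using r by (simp add: dcnt_def ucnt_def)
  qed
next
  case (Suc n)
  show ?case
  proof (intro allI impI)
    fix A :: "nat set" and x :: nat assume a: "finite A \<and> card A = Suc (Suc n) \<and> x \<in> A"
    define B where "B = A - {x}"
    have B1: "finite B" unfolding B_def using a by simp
    have B2: "card B = Suc n" unfolding B_def using a by (simp add: card_Diff_singleton)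
    have B3: "x \<notin> B" unfolding B_def by simp
    note B = B1 B2 B3
    define k where "k = rank A x"
    have kB: "rank B x = k" unfolding B_def k_def by (rule rank_remove)
    have k_le: "k \<le> Suc n" using rank_le[OF B(1), of x] kB B by simp
    have IHd: "dcnt B y = P n (rank B y) 0" and IHu: "ucnt B y = P n (n - rank B y) 0" if "y \<in> B" for y
      using Suc.IH[rule_format, of B y] B that by simp_all
    have "dcnt A x = card (\<Union>y\<in>{y\<in>A - {x}. y < x}. (Cons x) ` {ys. distinct ys \<and> set ys = A - {x} \<and> up_down ys \<and> hd ys = y})"
      unfolding dcnt_def using split_du[of A x n] a by simp
    also have "\<dots> = (\<Sum>y\<in>{y\<in>A - {x}. y < x}. card {ys. distinct ys \<and> set ys = A - {x} \<and> up_down ys \<and> hd ys = y})"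
      by (rule card_UN_Cons) (use a in simp_all)
    also have "\<dots> = (\<Sum>y\<in>{y\<in>B. y < x}. ucnt B y)"
      unfolding B_def ucnt_def ..
    also have "\<dots> = (\<Sum>y\<in>{y\<in>B. y < x}. P n (n - rank B y) 0)"
      using IHu by (intro sum.cong) auto
    also have "\<dots> = (\<Sum>j\<in>rank B ` {y\<in>B. y < x}. P n (n - j) 0)"
      by (rule sum.reindex[symmetric, unfolded comp_def]) (rule inj_on_subset[OF rank_inj[OF B(1)]], auto)
    also have "\<dots> = (\<Sum>j<k. P n (n - j) 0)" using rank_image_less[OF B(1)] kB by simp
    also have "\<dots> = P (Suc n) k 0" using P_sum[OF k_le] by simp
    finally have d: "dcnt A x = P (Suc n) (rank A x) 0" unfolding k_def .
    have "ucnt A x = card (\<Union>y\<in>{y\<in>A - {x}. x < y}. (Cons x) ` {ys. distinct ys \<and> set ys = A - {x} \<and> down_up ys \<and> hd ys = y})"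
      unfolding ucnt_def using split_ud[of A x n] a by simp
    also have "\<dots> = (\<Sum>y\<in>{y\<in>A - {x}. x < y}. card {ys. distinct ys \<and> set ys = A - {x} \<and> down_up ys \<and> hd ys = y})"
      by (rule card_UN_Cons) (use a in simp_all)
    also have "\<dots> = (\<Sum>y\<in>{y\<in>B. x < y}. dcnt B y)"
      unfolding B_def dcnt_def ..
    also have "\<dots> = (\<Sum>y\<in>{y\<in>B. x < y}. P n (rank B y) 0)"
      using IHd by (intro sum.cong) auto
    also have "\<dots> = (\<Sum>j\<in>rank B ` {y\<in>B. x < y}. P n j 0)"
      by (rule sum.reindex[symmetric, unfolded comp_def]) (rule inj_on_subset[OF rank_inj[OF B(1)]], auto)
    also have "\<dots> = (\<Sum>j\<in>{k..<Suc n}. P n j 0)" using rank_image_greater[OF B(1) B(3)] kB B by simp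
    also have "\<dots> = (\<Sum>t<Suc n - k. P n (Suc n - Suc t) 0)" by (rule sum_rev_ivl[OF k_le, symmetric])
    also have "\<dots> = (\<Sum>t<Suc n - k. P n (n - t) 0)" by simp
    also have "\<dots> = P (Suc n) (Suc n - k) 0" using P_sum[of "Suc n - k" n] by simp
    finally have u: "ucnt A x = P (Suc n) (Suc n - rank A x) 0" unfolding k_def .
    show "dcnt A x = P (Suc n) (rank A x) 0 \<and> ucnt A x = P (Suc n) (Suc n - rank A x) 0"
      using d u by simp
  qed
qed

lemma euler_P: "euler_E m = P m m 0"
proof (cases m)
  case 0
  have "{xs. distinct xs \<and> set xs = {1..m} \<and> down_up xs} = {[]}"
  proof (intro equalityI subsetI)
    fix xs assume "xs \<in> {xs. distinct xs \<and> set xs = {1..m} \<and> down_up xs}"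
    then have "set xs = {}" using 0 by simp
    then show "xs \<in> {[]}" by simp
  next
    fix xs :: "nat list" assume "xs \<in> {[]}" then show "xs \<in> {xs. distinct xs \<and> set xs = {1..m} \<and> down_up xs}"
      using 0 by (simp add: down_up_def)
  qed
  then show ?thesis using 0 by (simp add: euler_E_def)
next
  case (Suc n)
  define A where "A = {1..m}"
  have A1: "finite A" unfolding A_def by simp
  have A2: "card A = Suc n" using Suc unfolding A_def by simp
  note A = A1 A2
  have "{xs. distinct xs \<and> set xs = A \<and> down_up xs} =
        (\<Union>x\<in>A. {xs. distinct xs \<and> set xs = A \<and> down_up xs \<and> hd xs = x})"
  proof (intro equalityI subsetI)
    fix xs assume xs: "xs \<in> {xs. distinct xs \<and> set xs = A \<and> down_up xs}"
    have "xs \<noteq> []"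
    proof
      assume "xs = []" then have "A = {}" using xs by simp
      then show False using A2 by simp
    qed
    then have "hd xs \<in> A" using xs by (metis (mono_tags, lifting) hd_in_set mem_Collect_eq)
    then show "xs \<in> (\<Union>x\<in>A. {xs. distinct xs \<and> set xs = A \<and> down_up xs \<and> hd xs = x})" using xs by blast
  next
    fix xs assume "xs \<in> (\<Union>x\<in>A. {xs. distinct xs \<and> set xs = A \<and> down_up xs \<and> hd xs = x})"
    then show "xs \<in> {xs. distinct xs \<and> set xs = A \<and> down_up xs}" by blast
  qed
  then have "euler_E m = card (\<Union>x\<in>A. {xs. distinct xs \<and> set xs = A \<and> down_up xs \<and> hd xs = x})"
    by (simp add: euler_E_def A_def)
  also have "\<dots> = (\<Sum>x\<in>A. dcnt A x)"
    unfolding dcnt_def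
  proof (rule card_UN_disjoint)
    show "finite A" by (rule A1)
    show "\<forall>x\<in>A. finite {xs. distinct xs \<and> set xs = A \<and> down_up xs \<and> hd xs = x}"
      using finite_dl[OF A1, of "\<lambda>xs. down_up xs \<and> hd xs = _"] by simp
    show "\<forall>x\<in>A. \<forall>y\<in>A. x \<noteq> y \<longrightarrow>
      {xs. distinct xs \<and> set xs = A \<and> down_up xs \<and> hd xs = x} \<inter> {xs. distinct xs \<and> set xs = A \<and> down_up xs \<and> hd xs = y} = {}"
      by blast
  qed
  also have "\<dots> = (\<Sum>x\<in>A. P n (rank A x) 0)"
  proof (intro sum.cong refl)
    fix x assume "x \<in> A"
    then show "dcnt A x = P n (rank A x) 0" using counts[of n, rule_format, of A x] A by simp
  qed
  also have "\<dots> = (\<Sum>j\<in>rank A ` A. P n j 0)"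
    by (rule sum.reindex[symmetric, unfolded comp_def]) (rule rank_inj[OF A(1)])
  also have "\<dots> = (\<Sum>j<Suc n. P n j 0)" using rank_image[OF A(1)] A by simp
  also have "\<dots> = (\<Sum>t<Suc n. P n (n - t) 0)"
    using sum_rev_ivl[of 0 "Suc n" "\<lambda>j. P n j 0"] by (simp add: atLeast0LessThan)
  also have "\<dots> = P m m 0" using P_sum[of "Suc n" n] Suc by simp
  finally show ?thesis .
qed

theorem proposition2:
  fixes n k :: nat
  assumes "k \<le> n"
  shows "npaths n n k = (n choose k) * euler_E (n - k)"
proof -
  have "npaths n n k = P n n k" using npaths_P by simp
  also have "\<dots> = (n choose k) * P (n - k) (n - k) 0" by (rule P_diag[OF assms])
  also have "\<dots> = (n choose k) * euler_E (n - k)" by (simp only: euler_P)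
  finally show ?thesis .
qed

end
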